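(* Let $\mathbb{F}_Q$ be a prime field, $\mathbb{F}_Q^*=\mathbb{F}_Q\setminus\{0\}$, $\sigma\in\mathbb{N}$, and $H:\{0,1\}^\sigma\to\mathbb{F}_Q$ a function with no collisions on the inputs considered. An OLE tuple $(r_A,r_B,s_A,s_B)$ is generated by drawing $s_A,s_B$ uniformly from $\mathbb{F}_Q$ and $r_B$ uniformly from $\mathbb{F}_Q^*$, independently, and setting $r_A=(s_A+s_B)/r_B$ (so $r_Ar_B=s_A+s_B$); Alice receives $(r_A,s_A)$ and Bob receives $(r_B,s_B)$. Alice has input $x\in\{0,1\}^\sigma$ and Bob has input $y\in\{0,1\}^\sigma$. In the comparison protocol, Alice sends $c=s_A-H(x)$ to Bob, Bob sends $d=(c+H(y)+s_B)/r_B$ to Alice, and Alice outputs "match" iff $d=r_A$ (her output is whether $x=y$; Bob has no output). Then the protocol is secure in the semi-honest model: there exist simulators $\mathsf{Sim}_A$ (given $x$, Alice's OLE share and the output) and $\mathsf{Sim}_B$ (given $y$ and Bob's OLE share) whose outputs are identically distributed to Alice's and Bob's respective views in the protocol.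
   Context: Semi-honest security: a party's view consists of its input, its random coins/correlated randomness and all messages it receives; a protocol is secure if each party's view can be simulated from that party's input and output alone (here, perfectly, i.e. with identical distribution). All arithmetic is in $\mathbb{F}_Q$. *)

theory Defs
  imports "HOL-Probability.Probability" "HOL-Computational_Algebra.Primes"
begin

text \<open>The field F_Q is modelled as a finite field type 'a whose cardinality Q is prime
  (i.e. a prime field, up to isomorphism). Bit strings of length sigma are bool lists.\<close>

definition ole :: "('a::{finite,field} \<times> 'a \<times> 'a \<times> 'a) pmf" where
  "ole = do {
     sA \<leftarrow> pmf_of_set (UNIV :: 'a set);
     sB \<leftarrow> pmf_of_set (UNIV :: 'a set);
     rB \<leftarrow> pmf_of_set (UNIV - {0 :: 'a});
     return_pmf ((sA + sB) / rB, rB, sA, sB) }"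

definition msg_c :: "(bool list \<Rightarrow> 'a::field) \<Rightarrow> bool list \<Rightarrow> 'a \<Rightarrow> 'a" where
  "msg_c H x sA = sA - H x"

definition msg_d :: "(bool list \<Rightarrow> 'a::field) \<Rightarrow> bool list \<Rightarrow> 'a \<Rightarrow> 'a \<Rightarrow> 'a \<Rightarrow> 'a" where
  "msg_d H y c rB sB = (c + H y + sB) / rB"

definition view_A :: "(bool list \<Rightarrow> 'a::{finite,field}) \<Rightarrow> bool list \<Rightarrow> bool list
    \<Rightarrow> (bool list \<times> ('a \<times> 'a) \<times> 'a) pmf" where
  "view_A H x y = map_pmf (\<lambda>(rA, rB, sA, sB).
      (x, (rA, sA), msg_d H y (msg_c H x sA) rB sB)) ole"

definition view_B :: "(bool list \<Rightarrow> 'a::{finite,field}) \<Rightarrow> bool list \<Rightarrow> bool list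
    \<Rightarrow> (bool list \<times> ('a \<times> 'a) \<times> 'a) pmf" where
  "view_B H x y = map_pmf (\<lambda>(rA, rB, sA, sB).
      (y, (rB, sB), msg_c H x sA)) ole"

definition out_A :: "bool list \<times> ('a \<times> 'a) \<times> 'a \<Rightarrow> bool" where
  "out_A v = (case v of (x, (rA, sA), d) \<Rightarrow> d = rA)"

end

theory Submission
  imports Defs
begin

lemma uni_bij:
  assumes "bij_betw f A A" "finite A" "A \<noteq> {}"
  shows "bind_pmf (pmf_of_set A) (\<lambda>a. g (f a)) = bind_pmf (pmf_of_set A) g"
proof -
  have "map_pmf f (pmf_of_set A) = pmf_of_set A"
    using assms by (simp add: map_pmf_of_set_inj bij_betw_def)
  then show ?thesis
    by (metis (no_types) bind_map_pmf o_def)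
qed

lemma nz_ne: "(UNIV - {0::'a::{finite,field}}) \<noteq> {}"
  by (metis Diff_iff UNIV_I empty_iff zero_neq_one singletonD)

theorem theorem2:
  fixes H :: "bool list \<Rightarrow> 'a::{finite,field}" and \<sigma> :: nat
  assumes "prime CARD('a)"
    and "inj_on H {xs. length xs = \<sigma>}"
  shows "(\<exists>SimA :: bool list \<Rightarrow> bool \<Rightarrow> (bool list \<times> ('a \<times> 'a) \<times> 'a) pmf.
            \<forall>x y. length x = \<sigma> \<longrightarrow> length y = \<sigma> \<longrightarrow>
              view_A H x y = SimA x (x = y))
       \<and> (\<exists>SimB :: bool list \<Rightarrow> (bool list \<times> ('a \<times> 'a) \<times> 'a) pmf.
            \<forall>x y. length x = \<sigma> \<longrightarrow> length y = \<sigma> \<longrightarrow>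
              view_B H x y = SimB y)"
proof
  let ?U = "pmf_of_set (UNIV :: 'a set)"
  let ?N = "pmf_of_set (UNIV - {0 :: 'a})"
  define SF where "SF x = do { sA \<leftarrow> ?U; r \<leftarrow> ?U; e \<leftarrow> ?N; return_pmf (x, (r, sA), r + e) }"
    for x :: "bool list"
  have A: "view_A H x y = SF x" if "x \<noteq> y" "length x = \<sigma>" "length y = \<sigma>" for x y
  proof -
    define \<delta> where "\<delta> = H y - H x"
    have dnz: "\<delta> \<noteq> 0" using assms(2) that unfolding \<delta>_def inj_on_def by auto
    have "view_A H x y = do { sA \<leftarrow> ?U; sB \<leftarrow> ?U; rB \<leftarrow> ?N;
        return_pmf (x, ((sA + sB) / rB, sA), (sA - H x + H y + sB) / rB) }"
      unfolding view_A_def ole_def msg_c_def msg_d_def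
      by (simp add: map_bind_pmf)
    also have "\<dots> = do { sA \<leftarrow> ?U; rB \<leftarrow> ?N; sB \<leftarrow> ?U;
        return_pmf (x, ((sA + sB) / rB, sA), (sA - H x + H y + sB) / rB) }"
      by (rule bind_pmf_cong[OF refl]) (rule bind_commute_pmf)
    also have "\<dots> = do { sA \<leftarrow> ?U; rB \<leftarrow> ?N; r \<leftarrow> ?U;
        return_pmf (x, (r, sA), r + \<delta> / rB) }"
    proof (rule bind_pmf_cong[OF refl], rule bind_pmf_cong[OF refl])
      fix sA rB assume "rB \<in> set_pmf ?N"
      then have rnz: "rB \<noteq> 0" using nz_ne set_pmf_of_set[OF nz_ne] by auto
      have bij: "bij_betw (\<lambda>sB. (sA + sB) / rB) UNIV UNIV"
        by (rule bij_betwI[where g="\<lambda>r. r * rB - sA"]) (use rnz in auto)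
      have "bind_pmf ?U (\<lambda>sB. return_pmf (x, ((sA + sB) / rB, sA), (sA - H x + H y + sB) / rB))
          = bind_pmf ?U (\<lambda>sB. (\<lambda>r. return_pmf (x, (r, sA), r + \<delta> / rB)) ((sA + sB) / rB))"
        using rnz by (intro bind_pmf_cong refl) (simp add: \<delta>_def field_simps)
      also have "\<dots> = bind_pmf ?U (\<lambda>r. return_pmf (x, (r, sA), r + \<delta> / rB))"
        by (rule uni_bij[OF bij]) auto
      finally show "bind_pmf ?U (\<lambda>sB. return_pmf (x, ((sA + sB) / rB, sA), (sA - H x + H y + sB) / rB))
          = bind_pmf ?U (\<lambda>r. return_pmf (x, (r, sA), r + \<delta> / rB))" .
    qed
    also have "\<dots> = do { sA \<leftarrow> ?U; r \<leftarrow> ?U; rB \<leftarrow> ?N;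
        return_pmf (x, (r, sA), r + \<delta> / rB) }"
      by (rule bind_pmf_cong[OF refl]) (rule bind_commute_pmf)
    also have "\<dots> = SF x"
      unfolding SF_def
    proof (rule bind_pmf_cong[OF refl], rule bind_pmf_cong[OF refl])
      fix sA r
      have bij: "bij_betw (\<lambda>z. \<delta> / z) (UNIV - {0}) (UNIV - {0})"
        by (rule bij_betwI[where g="\<lambda>z. \<delta> / z"]) (use dnz in auto)
      show "bind_pmf ?N (\<lambda>rB. return_pmf (x, (r, sA), r + \<delta> / rB))
          = bind_pmf ?N (\<lambda>e. return_pmf (x, (r, sA), r + e))"
        by (rule uni_bij[OF bij, of "\<lambda>e. return_pmf (x, (r, sA), r + e)"]) (use nz_ne in auto)
    qed
    finally show ?thesis .
  qed
  show "\<exists>SimA :: bool list \<Rightarrow> bool \<Rightarrow> (bool list \<times> ('a \<times> 'a) \<times> 'a) pmf.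
            \<forall>x y. length x = \<sigma> \<longrightarrow> length y = \<sigma> \<longrightarrow>
              view_A H x y = SimA x (x = y)"
    by (rule exI[where x="\<lambda>x b. if b then view_A H x x else SF x"]) (auto simp: A)
next
  let ?U = "pmf_of_set (UNIV :: 'a set)"
  let ?N = "pmf_of_set (UNIV - {0 :: 'a})"
  define SB where "SB y = do { c \<leftarrow> ?U; sB \<leftarrow> ?U; rB \<leftarrow> ?N; return_pmf (y, (rB, sB), c) }"
    for y :: "bool list"
  have B: "view_B H x y = SB y" for x y
  proof -
    have "view_B H x y = bind_pmf ?U (\<lambda>sA. (\<lambda>c. do { sB \<leftarrow> ?U; rB \<leftarrow> ?N; return_pmf (y, (rB, sB), c) }) (sA - H x))"
      unfolding view_B_def ole_def msg_c_def
      by (simp add: map_bind_pmf)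
    also have "\<dots> = SB y"
      unfolding SB_def
      by (rule uni_bij) (auto intro!: bij_betwI[where g="\<lambda>c. c + H x"])
    finally show ?thesis .
  qed
  show "\<exists>SimB :: bool list \<Rightarrow> (bool list \<times> ('a \<times> 'a) \<times> 'a) pmf.
            \<forall>x y. length x = \<sigma> \<longrightarrow> length y = \<sigma> \<longrightarrow>
              view_B H x y = SimB y"
    using B by blast
qed

end
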